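(* Let $m,k$ be natural numbers. If the first term in the hereditary representation in base $k+1$ of the $k$-th term $G(k,m)$ of the Goodstein sequence $G(m)$ is of the form $1\cdot(k+1)^{l}$ with $k+1\le l$, then $G(k+1,m)>G(k,m)$.
   Context: For a natural number base $b>1$, the hereditary representation $m\langle b\rangle$ of $m$ is $\sum_{i=0}^{l} a_i b^{i}$ with $0\le a_i<b$, $a_l\ne0$, each exponent itself written in hereditary representation in base $b$, recursively; its first (leading) term is $a_l b^{l}$. $m\langle b\rangle''$ is obtained by syntactically replacing every $b$ by $b+1$ in $m\langle b\rangle$. The Goodstein sequence $G(m)=\{m, m''-1, (m''-1)''-1,\dots\}$ starts from $m$ in base $2$; its $n$-th term is $G(n,m)$, with $G(1,m)=m$ in base $2$, $G(k,m)$ written in base $k+1$, and $G(k+1,m)=G(k,m)\langle k+1\rangle''-1$. *)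

theory Defs
  imports Main
begin

text \<open>Base bump: write m in hereditary base-b representation
  m = sum_i a_i b^i (a_i = i-th base-b digit, exponents i themselves hereditary)
  and replace every b by b+1, i.e. m<b>'' = sum_i a_i (b+1)^(i<b>'').
  Digit positions i with a nonzero digit satisfy i < m, so summing over i < m suffices.\<close>
function bump :: "nat \<Rightarrow> nat \<Rightarrow> nat" where
  "bump b m = (if b < 2 then m else
     (\<Sum>i<m. (m div b ^ i mod b) * (b + 1) ^ bump b i))"
  by pat_completeness simp
termination
  by (relation "measure snd") auto

declare bump.simps[simp del]

text \<open>Goodstein sequence, 1-indexed: G(1,m) = m, G(k+1,m) = G(k,m)<k+1>'' - 1.
  Index 0 is not used (set to m for totality).\<close>
fun goodstein :: "nat \<Rightarrow> nat \<Rightarrow> nat" where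
  "goodstein 0 m = m"
| "goodstein (Suc 0) m = m"
| "goodstein (Suc (Suc k)) m = bump (Suc k + 1) (goodstein (Suc k) m) - 1"

definition lead_exp :: "nat \<Rightarrow> nat \<Rightarrow> nat" where
  "lead_exp b m = (GREATEST l. b ^ l \<le> m)"

definition lead_coeff :: "nat \<Rightarrow> nat \<Rightarrow> nat" where
  "lead_coeff b m = m div b ^ lead_exp b m"

end

theory Submission
  imports Defs
begin

lemma digits_sum:
  fixes b m :: nat
  shows "(\<Sum>i<n. (m div b ^ i mod b) * b ^ i) = m mod b ^ n"
proof (induction n)
  case 0 then show ?case by simp
next
  case (Suc n)
  have "m mod b ^ Suc n = b ^ n * (m div b ^ n mod b) + m mod b ^ n"
    by (metis mod_mult2_eq power_Suc2)
  then show ?case using Suc by (simp add: mult.commute)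
qed

lemma bump_ge: "(2::nat) \<le> b \<Longrightarrow> m \<le> bump b m"
proof (induction m rule: less_induct)
  case (less m)
  have "m = m mod b ^ m"
  proof -
    have "m < 2 ^ m" by (rule less_exp)
    also have "\<dots> \<le> b ^ m" using less.prems by (rule power_mono) simp
    finally show ?thesis by simp
  qed
  also have "\<dots> = (\<Sum>i<m. (m div b ^ i mod b) * b ^ i)" by (simp add: digits_sum)
  also have "\<dots> \<le> (\<Sum>i<m. (m div b ^ i mod b) * (b + 1) ^ bump b i)"
  proof (rule sum_mono)
    fix i assume "i \<in> {..<m}"
    then have "i \<le> bump b i" using less by auto
    then have "b ^ i \<le> (b+1) ^ bump b i"
    proof -
      have "b ^ i \<le> b ^ bump b i" using less.prems \<open>i \<le> bump b i\<close> by (simp add: power_increasing)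
      also have "\<dots> \<le> (b+1) ^ bump b i" by (rule power_mono) simp_all
      finally show ?thesis .
    qed
    then show "(m div b ^ i mod b) * b ^ i \<le> (m div b ^ i mod b) * (b + 1) ^ bump b i"
      by simp
  qed
  also have "\<dots> = bump b m" using less.prems by (subst (2) bump.simps) simp
  finally show ?case .
qed

lemma pow_ineq: "(2::nat) \<le> b \<Longrightarrow> (b+1)^(l+2) \<ge> b^(l+2) + (l+2)*b^(l+1) + 1"
proof (induction l)
  case 0 then show ?case by (simp add: power2_eq_square algebra_simps)
next
  case (Suc l)
  have "(b+1)^(Suc l+2) = (b+1) * (b+1)^(l+2)" by simp
  also have "\<dots> \<ge> (b+1) * (b^(l+2) + (l+2)*b^(l+1) + 1)"
    using Suc by (intro mult_le_mono2) simp
  finally have "(b+1)^(Suc l+2) \<ge> (b+1) * (b^(l+2) + (l+2)*b^(l+1) + 1)" .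
  moreover have "(b+1) * (b^(l+2) + (l+2)*b^(l+1) + 1) \<ge> b^(Suc l+2) + (Suc l+2)*b^(Suc l+1) + 1"
    by (simp add: algebra_simps)
  ultimately show ?case by linarith
qed

theorem lemma4:
  fixes m k :: nat
  assumes "k \<ge> 1"
    and "goodstein k m \<noteq> 0"
    and "lead_coeff (k + 1) (goodstein k m) = 1"
    and "k + 1 \<le> lead_exp (k + 1) (goodstein k m)"
  shows "goodstein (k + 1) m > goodstein k m"
proof -
  define b where "b = k + 1"
  define n where "n = goodstein k m"
  define l where "l = lead_exp b n"
  have b2: "2 \<le> b" using assms(1) b_def by simp
  have lb: "b \<le> l" using assms(4) b_def n_def l_def by simp
  have d1: "n div b ^ l = 1" using assms(3) unfolding lead_coeff_def b_def n_def l_def by simp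
  have bpos: "0 < b ^ l" using b2 by simp
  have lo: "b ^ l \<le> n"
  proof (rule ccontr)
    assume "\<not> b ^ l \<le> n"
    then have "n div b ^ l = 0" by simp
    with d1 show False by simp
  qed
  have hi: "n < 2 * b ^ l"
  proof -
    have "n = b ^ l * (n div b ^ l) + n mod b ^ l" by simp
    then have "n = b ^ l + n mod b ^ l" using d1 by simp
    moreover have "n mod b ^ l < b ^ l" using bpos by simp
    ultimately show ?thesis using d1 by linarith
  qed
  have lt: "l < n"
  proof -
    have "l < 2 ^ l" by (rule less_exp)
    also have "\<dots> \<le> b ^ l" using b2 by (rule power_mono) simp
    finally show ?thesis using lo by simp
  qed
  have dig: "n div b ^ l mod b = 1" using d1 b2 by simp
  have "(b+1) ^ l \<le> (b+1) ^ bump b l"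
    using bump_ge[OF b2] by (simp add: power_increasing)
  also have "\<dots> = (n div b ^ l mod b) * (b + 1) ^ bump b l" using dig by simp
  also have "\<dots> \<le> (\<Sum>i<n. (n div b ^ i mod b) * (b + 1) ^ bump b i)"
    using lt by (intro member_le_sum) auto
  also have "\<dots> = bump b n" using b2 by (subst (2) bump.simps) simp
  finally have A: "(b+1) ^ l \<le> bump b n" .
  obtain j where j: "l = j + 2" using lb b2 by (metis add.commute le_Suc_ex le_trans)
  have "(b+1)^l \<ge> b^l + l*b^(j+1) + 1" using pow_ineq[OF b2, of j] j by simp
  moreover have "l*b^(j+1) \<ge> b^l"
  proof -
    have "b * b^(j+1) \<le> l * b^(j+1)" using lb by (rule mult_le_mono1)
    moreover have "b^l = b * b^(j+1)" using j by simp
    ultimately show ?thesis by simp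
  qed
  ultimately have B: "(b+1)^l \<ge> 2*b^l + 1" by linarith
  have G: "goodstein (k + 1) m = bump b n - 1"
    using assms(1) unfolding b_def n_def by (cases k) auto
  show ?thesis using A B hi G n_def by linarith
qed

end
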